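(* Let $A$ be a nonempty finite set of $n$ alternatives and let $\mathcal{F}$ be a nonempty collection of nonempty subsets of $A$ that is downward closed (if $S\in\mathcal{F}$ and $\emptyset\neq S'\subseteq S$ then $S'\in\mathcal{F}$) and contains every singleton $\{a\}$, $a\in A$. A feasibility-constrained choice rule $C$ is (capacity-constrained) lexicographic if and only if it satisfies $\mathcal{F}$-capacity-filling, monotonicity, and the capacity-wise strong axiom of revealed preference (CSARP).
   Context: Let $\mathcal{A}$ be the set of all nonempty subsets of $A$. A feasibility-constrained choice rule is a map $C$ assigning to each $(S,q)\in\mathcal{A}\times\{1,\dots,n\}$ a nonempty set $C(S,q)\subseteq S$ with $C(S,q)\in\mathcal{F}$ and $|C(S,q)|\le q$. Set $C(S,0)=\emptyset$ by convention. A priority ordering is a complete, transitive and antisymmetric binary relation on $A$; a priority profile is a list $(\succ_1,\dots,\succ_n)$ of priority orderings. $C$ is (capacity-constrained) lexicographic if there exists a priority profile $(\succ_1,\dots,\succ_n)$ such that for each $(S,q)$, $C(S,q)$ is obtained as follows: choose the $\succ_1$-highest alternative of $S$; then, for $k=2,\dots,q$, as long as some remaining alternative exists whose addition to the previously chosen alternatives gives a set in $\mathcal{F}$, choose the $\succ_k$-highest alternative among those remaining alternatives of $S$ that form a set in $\mathcal{F}$ together with the previously chosen ones. $\mathcal{F}$-capacity-filling: for each $(S,q)$ and $a\in S$, if $a\notin C(S,q)$ then either $|C(S,q)|=q$ or $C(S,q)\cup\{a\}\notin\mathcal{F}$. Monotonicity: for each $S\in\mathcal{A}$ and $q\in\{1,\dots,n-1\}$,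 $C(S,q)\subseteq C(S,q+1)$. For $q\in\{1,\dots,n\}$ and $a,b\in A$, write $a\mathrel{R^{\mathcal{F}}_q} b$ if there exists $S\in\mathcal{A}$ with $a,b\in S$, $a,b\notin C(S,q-1)$, $a\in C(S,q)$, $b\notin C(S,q)$, and $C(S,q-1)\cup\{b\}\in\mathcal{F}$. CSARP: for each $q\in\{1,\dots,n\}$ the relation $R^{\mathcal{F}}_q$ is acyclic. *)

theory Defs
  imports Main
begin

text \<open>A choice rule is a function
  C :: 'a set \<Rightarrow> nat \<Rightarrow> 'a set; only its values on nonempty subsets S of A
  and capacities q in {1..n} matter. The convention C(S,0) = {} is
  implemented by Cz.\<close>

definition feasibility_family :: "'a set \<Rightarrow> 'a set set \<Rightarrow> bool" where
  "feasibility_family A F \<longleftrightarrow>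
     F \<noteq> {} \<and> (\<forall>S\<in>F. S \<noteq> {} \<and> S \<subseteq> A) \<and>
     (\<forall>S\<in>F. \<forall>S'. S' \<noteq> {} \<and> S' \<subseteq> S \<longrightarrow> S' \<in> F) \<and>
     (\<forall>a\<in>A. {a} \<in> F)"

definition Cz :: "('a set \<Rightarrow> nat \<Rightarrow> 'a set) \<Rightarrow> 'a set \<Rightarrow> nat \<Rightarrow> 'a set" where
  "Cz C S q = (if q = 0 then {} else C S q)"

definition fc_choice_rule :: "'a set \<Rightarrow> 'a set set \<Rightarrow> ('a set \<Rightarrow> nat \<Rightarrow> 'a set) \<Rightarrow> bool" where
  "fc_choice_rule A F C \<longleftrightarrow>
     (\<forall>S q. S \<noteq> {} \<and> S \<subseteq> A \<and> 1 \<le> q \<and> q \<le> card A \<longrightarrow>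
        C S q \<noteq> {} \<and> C S q \<subseteq> S \<and> C S q \<in> F \<and> card (C S q) \<le> q)"

text \<open>The k-th priority ordering is given as a (reflexive) linear order relation on A;
  the p-highest element of a set T is the unique a in T with (a,b) in p for all b in T.\<close>

definition top_elem :: "'a rel \<Rightarrow> 'a set \<Rightarrow> 'a" where
  "top_elem r T = (THE a. a \<in> T \<and> (\<forall>b\<in>T. (a, b) \<in> r))"

fun lex_seq :: "(nat \<Rightarrow> 'a rel) \<Rightarrow> 'a set set \<Rightarrow> 'a set \<Rightarrow> nat \<Rightarrow> 'a set" where
  "lex_seq p F S 0 = {}"
| "lex_seq p F S (Suc k) =
     (let T = lex_seq p F S k; cand = {a \<in> S - T. insert a T \<in> F}
      in if cand = {} then T else insert (top_elem (p (Suc k)) cand) T)"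

definition lexicographic :: "'a set \<Rightarrow> 'a set set \<Rightarrow> ('a set \<Rightarrow> nat \<Rightarrow> 'a set) \<Rightarrow> bool" where
  "lexicographic A F C \<longleftrightarrow>
     (\<exists>p :: nat \<Rightarrow> 'a rel.
        (\<forall>k\<in>{1..card A}. linear_order_on A (p k)) \<and>
        (\<forall>S q. S \<noteq> {} \<and> S \<subseteq> A \<and> 1 \<le> q \<and> q \<le> card A \<longrightarrow> C S q = lex_seq p F S q))"

definition capacity_filling :: "'a set \<Rightarrow> 'a set set \<Rightarrow> ('a set \<Rightarrow> nat \<Rightarrow> 'a set) \<Rightarrow> bool" where
  "capacity_filling A F C \<longleftrightarrow>
     (\<forall>S q a. S \<noteq> {} \<and> S \<subseteq> A \<and> 1 \<le> q \<and> q \<le> card A \<and> a \<in> S \<and> a \<notin> C S q \<longrightarrow>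
        card (C S q) = q \<or> insert a (C S q) \<notin> F)"

definition monotone_rule :: "'a set \<Rightarrow> ('a set \<Rightarrow> nat \<Rightarrow> 'a set) \<Rightarrow> bool" where
  "monotone_rule A C \<longleftrightarrow>
     (\<forall>S q. S \<noteq> {} \<and> S \<subseteq> A \<and> 1 \<le> q \<and> q \<le> card A - 1 \<longrightarrow> C S q \<subseteq> C S (q + 1))"

definition revealed_rel :: "'a set \<Rightarrow> 'a set set \<Rightarrow> ('a set \<Rightarrow> nat \<Rightarrow> 'a set) \<Rightarrow> nat \<Rightarrow> 'a rel" where
  "revealed_rel A F C q = {(a, b). \<exists>S. S \<noteq> {} \<and> S \<subseteq> A \<and> a \<in> S \<and> b \<in> S \<and>
      a \<notin> Cz C S (q - 1) \<and> b \<notin> Cz C S (q - 1) \<and> a \<in> C S q \<and> b \<notin> C S q \<and>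
      insert b (Cz C S (q - 1)) \<in> F}"

definition CSARP :: "'a set \<Rightarrow> 'a set set \<Rightarrow> ('a set \<Rightarrow> nat \<Rightarrow> 'a set) \<Rightarrow> bool" where
  "CSARP A F C \<longleftrightarrow> (\<forall>q\<in>{1..card A}. acyclic (revealed_rel A F C q))"

end

theory Submission imports Defs begin

lemma lin_top_ex:
  assumes "linear_order_on A r" "finite T" "T \<noteq> {}" "T \<subseteq> A"
  shows "\<exists>a\<in>T. \<forall>b\<in>T. (a, b) \<in> r"
  using assms(2,3,4)
proof (induction T rule: finite_ne_induct)
  case (singleton x)
  then show ?case using assms(1) by (auto simp: linear_order_on_def partial_order_on_def preorder_on_def refl_on_def)
next
  case (insert x F)
  then obtain a where a: "a \<in> F" "\<forall>b\<in>F. (a, b) \<in> r" by auto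
  have xA: "x \<in> A" "a \<in> A" using insert a by auto
  show ?case
  proof (cases "(a, x) \<in> r")
    case True then show ?thesis using a by auto
  next
    case False
    then have "(x, a) \<in> r" using assms(1) xA unfolding linear_order_on_def total_on_def
      by (metis False partial_order_on_def preorder_on_def refl_onD)
    then have "\<forall>b\<in>F. (x, b) \<in> r" using a assms(1)
      unfolding linear_order_on_def partial_order_on_def preorder_on_def trans_def by blast
    then show ?thesis using assms(1) xA
      by (auto simp: linear_order_on_def partial_order_on_def preorder_on_def refl_on_def)
  qed
qed

lemma top_elem_prop:
  assumes "linear_order_on A r" "finite T" "T \<noteq> {}" "T \<subseteq> A"
  shows "top_elem r T \<in> T \<and> (\<forall>b\<in>T. (top_elem r T, b) \<in> r)"
proof -
  obtain a where a: "a \<in> T" "\<forall>b\<in>T. (a, b) \<in> r" using lin_top_ex[OF assms] by blast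
  have "\<exists>!a. a \<in> T \<and> (\<forall>b\<in>T. (a, b) \<in> r)"
  proof
    show "a \<in> T \<and> (\<forall>b\<in>T. (a, b) \<in> r)" using a by blast
  next
    fix c assume "c \<in> T \<and> (\<forall>b\<in>T. (c, b) \<in> r)"
    then show "c = a" using a assms(1)
      unfolding linear_order_on_def partial_order_on_def antisym_def by blast
  qed
  then show ?thesis unfolding top_elem_def by (rule theI')
qed

lemma lex_mono: "lex_seq p F S k \<subseteq> lex_seq p F S (Suc k)"
  by (auto simp: Let_def)

lemma lex_finite: "finite (lex_seq p F S k)"
  by (induction k) (auto simp: Let_def)

lemma lex_card: "card (lex_seq p F S k) \<le> k"
proof (induction k)
  case 0 then show ?case by simp
next
  case (Suc k)
  then show ?case using lex_finite[of p F S k]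
    by (auto simp: Let_def card_insert_if)
qed


lemma lex_step:
  fixes F :: "'a set set"
  assumes "linear_order_on A (p (Suc k))" "finite S" "S \<subseteq> A"
  defines "T \<equiv> lex_seq p F S k"
  defines "cand \<equiv> {a \<in> S - T. insert a T \<in> F}"
  shows "(cand = {} \<longrightarrow> lex_seq p F S (Suc k) = T) \<and>
         (cand \<noteq> {} \<longrightarrow> lex_seq p F S (Suc k) = insert (top_elem (p (Suc k)) cand) T \<and>
            top_elem (p (Suc k)) cand \<in> cand \<and> (\<forall>b\<in>cand. (top_elem (p (Suc k)) cand, b) \<in> p (Suc k)))"
proof -
  have "finite cand" "cand \<subseteq> A" using assms(2,3) unfolding cand_def by auto
  then have tp: "cand \<noteq> {} \<Longrightarrow> top_elem (p (Suc k)) cand \<in> cand \<and> (\<forall>b\<in>cand. (top_elem (p (Suc k)) cand, b) \<in> p (Suc k))"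
    using top_elem_prop[OF assms(1), of cand] by blast
  have eq: "lex_seq p F S (Suc k) = (if cand = {} then T else insert (top_elem (p (Suc k)) cand) T)"
    unfolding T_def cand_def by (simp only: lex_seq.simps Let_def)
  show ?thesis
  proof (cases "cand = {}")
    case True
    then show ?thesis using eq by simp
  next
    case False
    then show ?thesis using eq tp by simp
  qed
qed

lemma lex_cf:
  assumes "finite S" "S \<subseteq> A" "\<forall>k\<in>{1..q}. linear_order_on A (p k)"
  shows "card (lex_seq p F S q) = q \<or> (\<forall>a\<in>S - lex_seq p F S q. insert a (lex_seq p F S q) \<notin> F)"
  using assms(3)
proof (induction q)
  case 0 then show ?case by simp
next
  case (Suc k)
  let ?T = "lex_seq p F S k"
  let ?cand = "{a \<in> S - ?T. insert a ?T \<in> F}"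
  have lin: "linear_order_on A (p (Suc k))" using Suc.prems by auto
  have IH: "card ?T = k \<or> (\<forall>a\<in>S - ?T. insert a ?T \<notin> F)" using Suc by auto
  note st = lex_step[of A p k S F, OF lin assms(1,2)]
  show ?case
  proof (cases "?cand = {}")
    case True
    then show ?thesis using st by auto
  next
    case False
    then have "card ?T = k" using IH by auto
    moreover have "top_elem (p (Suc k)) ?cand \<notin> ?T" using st False by auto
    ultimately show ?thesis using st False lex_finite[of p F S k] by auto
  qed
qed

lemma rank_exists:
  fixes R :: "'a rel"
  assumes "finite A" "acyclic R"
  shows "\<exists>f::'a \<Rightarrow> nat. inj_on f A \<and> (\<forall>x\<in>A. \<forall>y\<in>A. (x, y) \<in> R \<longrightarrow> f x < f y)"
  using assms(1)
proof (induction "card A" arbitrary: A rule: less_induct)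
  case less
  show ?case
  proof (cases "A = {}")
    case True then show ?thesis by auto
  next
    case False
    then obtain x0 where x0: "x0 \<in> A" by auto
    have "finite (R \<inter> A \<times> A)" using less.prems by auto
    moreover have "acyclic (R \<inter> A \<times> A)" using assms(2) acyclic_subset by blast
    ultimately have wf: "wf (R \<inter> A \<times> A)" by (rule finite_acyclic_wf)
    obtain m where m: "m \<in> A" "\<And>y. (y, m) \<in> R \<inter> A \<times> A \<Longrightarrow> y \<notin> A"
      using wfE_min[OF wf x0] by blast
    have "card (A - {m}) < card A" using card_Diff1_less[OF less.prems m(1)] .
    moreover have "finite (A - {m})" using less.prems by auto
    ultimately have "\<exists>f::'a \<Rightarrow> nat. inj_on f (A - {m}) \<and> (\<forall>x\<in>A - {m}. \<forall>y\<in>A - {m}. (x, y) \<in> R \<longrightarrow> f x < f y)"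
      by (rule less.hyps)
    then obtain f :: "'a \<Rightarrow> nat" where f: "inj_on f (A - {m})" "\<forall>x\<in>A - {m}. \<forall>y\<in>A - {m}. (x, y) \<in> R \<longrightarrow> f x < f y"
      by blast
    define g where "g x = (if x = m then 0 else Suc (f x))" for x
    have "inj_on g A" using f(1) unfolding g_def inj_on_def by auto
    moreover have "\<forall>x\<in>A. \<forall>y\<in>A. (x, y) \<in> R \<longrightarrow> g x < g y"
    proof (intro ballI impI)
      fix x y assume xy: "x \<in> A" "y \<in> A" "(x, y) \<in> R"
      then have "y \<noteq> m" using m by blast
      moreover have "x \<noteq> y" using xy(3) assms(2) unfolding acyclic_def by auto
      ultimately show "g x < g y" using f(2) xy unfolding g_def by auto
    qed
    ultimately show ?thesis by blast
  qed
qed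

lemma rank_linear:
  assumes "inj_on f A"
  shows "linear_order_on A {(x, y). x \<in> A \<and> y \<in> A \<and> (f x :: nat) \<le> f y}"
  using assms
  unfolding linear_order_on_def partial_order_on_def preorder_on_def refl_on_def trans_def
    antisym_def total_on_def inj_on_def
  by auto

theorem proposition2:
  fixes A :: "'a set" and F :: "'a set set" and C :: "'a set \<Rightarrow> nat \<Rightarrow> 'a set"
  assumes "finite A" and "A \<noteq> {}"
    and "feasibility_family A F"
    and "fc_choice_rule A F C"
  shows "lexicographic A F C \<longleftrightarrow>
           capacity_filling A F C \<and> monotone_rule A C \<and> CSARP A F C"
proof
  assume "lexicographic A F C"
  then obtain p where lin: "\<forall>k\<in>{1..card A}. linear_order_on A (p k)"
    and eqs0: "\<forall>S q. S \<noteq> {} \<and> S \<subseteq> A \<and> 1 \<le> q \<and> q \<le> card A \<longrightarrow> C S q = lex_seq p F S q"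
    unfolding lexicographic_def by (elim exE conjE)
  have eqs: "C S q = lex_seq p F S q" if "S \<noteq> {}" "S \<subseteq> A" "1 \<le> q" "q \<le> card A" for S q
    using eqs0 that by blast
  have czeq: "Cz C S q = lex_seq p F S q" if "S \<noteq> {}" "S \<subseteq> A" "q \<le> card A" for S q
    using that eqs[of S q] by (cases q) (auto simp: Cz_def)
  have "capacity_filling A F C"
    unfolding capacity_filling_def
  proof (intro allI impI)
    fix S q a assume h: "S \<noteq> {} \<and> S \<subseteq> A \<and> 1 \<le> q \<and> q \<le> card A \<and> a \<in> S \<and> a \<notin> C S q"
    have fS: "finite S" using h assms(1) finite_subset by blast
    have "card (lex_seq p F S q) = q \<or> (\<forall>a\<in>S - lex_seq p F S q. insert a (lex_seq p F S q) \<notin> F)"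
      using lex_cf[OF fS, of A q p F] h lin by auto
    then show "card (C S q) = q \<or> insert a (C S q) \<notin> F" using h eqs[of S q] by auto
  qed
  moreover have "monotone_rule A C"
    unfolding monotone_rule_def
  proof (intro allI impI)
    fix S q assume h: "S \<noteq> {} \<and> S \<subseteq> A \<and> 1 \<le> q \<and> q \<le> card A - 1"
    then show "C S q \<subseteq> C S (q + 1)" using eqs[of S q] eqs[of S "q+1"] lex_mono[of p F S q] by auto
  qed
  moreover have "CSARP A F C"
    unfolding CSARP_def
  proof
    fix q assume q: "q \<in> {1..card A}"
    then obtain k where k: "q = Suc k" by (cases q) auto
    have linq: "linear_order_on A (p q)" using q lin by auto
    have "revealed_rel A F C q \<subseteq> p q - Id"
    proof
      fix z assume "z \<in> revealed_rel A F C q"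
      then obtain a b S where z: "z = (a, b)" and S: "S \<noteq> {}" "S \<subseteq> A" "a \<in> S" "b \<in> S"
        "a \<notin> Cz C S (q - 1)" "b \<notin> Cz C S (q - 1)" "a \<in> C S q" "b \<notin> C S q"
        "insert b (Cz C S (q - 1)) \<in> F"
        unfolding revealed_rel_def by blast
      have fS: "finite S" using S assms(1) finite_subset by blast
      have e1: "Cz C S k = lex_seq p F S k" using czeq[of S k] S q k by auto
      have e2: "C S q = lex_seq p F S (Suc k)" using eqs[of S q] S q k by auto
      note st = lex_step[of A p k S F, OF linq[unfolded k] fS S(2)]
      let ?cand = "{a \<in> S - lex_seq p F S k. insert a (lex_seq p F S k) \<in> F}"
      have bc: "b \<in> ?cand" using S e1 k by auto
      have ne: "?cand \<noteq> {}" using bc by blast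
      have "a = top_elem (p (Suc k)) ?cand" using st ne S e1 e2 k by auto
      then have "(a, b) \<in> p q" using st ne bc k by auto
      moreover have "a \<noteq> b" using S by auto
      ultimately show "z \<in> p q - Id" using z by auto
    qed
    then show "acyclic (revealed_rel A F C q)"
      using linear_order_on_acyclic[OF linq] acyclic_subset by blast
  qed
  ultimately show "capacity_filling A F C \<and> monotone_rule A C \<and> CSARP A F C" by blast
next
  assume "capacity_filling A F C \<and> monotone_rule A C \<and> CSARP A F C"
  then have cf: "capacity_filling A F C" and mono: "monotone_rule A C" and cs: "CSARP A F C" by auto
  have down: "\<And>X Y. X \<in> F \<Longrightarrow> Y \<noteq> {} \<Longrightarrow> Y \<subseteq> X \<Longrightarrow> Y \<in> F"
    using assms(3) unfolding feasibility_family_def by blast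
  have fc: "\<And>S q. S \<noteq> {} \<Longrightarrow> S \<subseteq> A \<Longrightarrow> 1 \<le> q \<Longrightarrow> q \<le> card A \<Longrightarrow>
      C S q \<noteq> {} \<and> C S q \<subseteq> S \<and> C S q \<in> F \<and> card (C S q) \<le> q"
    using assms(4) unfolding fc_choice_rule_def by blast
  have "\<forall>k. \<exists>f::'a \<Rightarrow> nat. k \<in> {1..card A} \<longrightarrow> inj_on f A \<and>
      (\<forall>x\<in>A. \<forall>y\<in>A. (x, y) \<in> revealed_rel A F C k \<longrightarrow> f x < f y)"
    using rank_exists[OF assms(1)] cs unfolding CSARP_def by blast
  then obtain f :: "nat \<Rightarrow> 'a \<Rightarrow> nat" where f: "\<And>k. k \<in> {1..card A} \<Longrightarrow> inj_on (f k) A \<and>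
      (\<forall>x\<in>A. \<forall>y\<in>A. (x, y) \<in> revealed_rel A F C k \<longrightarrow> f k x < f k y)"
    by metis
  define p where "p k = {(x, y). x \<in> A \<and> y \<in> A \<and> f k x \<le> f k y}" for k
  have lin: "linear_order_on A (p k)" if "k \<in> {1..card A}" for k
    unfolding p_def using rank_linear f[OF that] by blast
  have main: "q \<le> card A \<longrightarrow> Cz C S q = lex_seq p F S q" if S: "S \<noteq> {}" "S \<subseteq> A" for S q
  proof (induction q)
    case 0 then show ?case by (simp add: Cz_def)
  next
    case (Suc k)
    show ?case
    proof
      assume kA: "Suc k \<le> card A"
      define T where "T = lex_seq p F S k"
      define X where "X = C S (Suc k)"
      have fS: "finite S" using S assms(1) finite_subset by blast
      have TC: "T = Cz C S k" using Suc kA unfolding T_def by auto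
      have X: "X \<noteq> {}" "X \<subseteq> S" "X \<in> F" "card X \<le> Suc k" using fc[OF S, of "Suc k"] kA unfolding X_def by auto
      have fX: "finite X" using X(2) fS finite_subset by blast
      have TX: "T \<subseteq> X"
      proof (cases k)
        case 0 then show ?thesis using TC by (simp add: Cz_def)
      next
        case (Suc j)
        have "1 \<le> k" "k \<le> card A - 1" using Suc kA by auto
        then have "C S k \<subseteq> C S (k + 1)" using mono S unfolding monotone_rule_def by blast
        moreover have "T = C S k" using TC Suc by (simp add: Cz_def)
        ultimately show ?thesis unfolding X_def by simp
      qed
      have cardT: "card T \<le> k" unfolding T_def by (rule lex_card)
      have linS: "linear_order_on A (p (Suc k))" using lin kA by auto
      note st = lex_step[of A p k S F, OF linS fS S(2), folded T_def]
      let ?cand = "{a \<in> S - T. insert a T \<in> F}"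
      show "Cz C S (Suc k) = lex_seq p F S (Suc k)"
      proof (cases "?cand = {}")
        case True
        have "X \<subseteq> T"
        proof
          fix x assume x: "x \<in> X"
          show "x \<in> T"
          proof (rule ccontr)
            assume "x \<notin> T"
            moreover have "insert x T \<in> F" using down[OF X(3)] x TX by auto
            ultimately have "x \<in> ?cand" using x X(2) by auto
            then show False using True by blast
          qed
        qed
        then have "X = T" using TX by auto
        then show ?thesis using st True unfolding X_def Cz_def by auto
      next
        case False
        define a where "a = top_elem (p (Suc k)) ?cand"
        have a: "a \<in> ?cand" "\<forall>b\<in>?cand. (a, b) \<in> p (Suc k)"
          and lexS: "lex_seq p F S (Suc k) = insert a T"
          using st False unfolding a_def by auto
        have cardTk: "card T = k"
        proof (cases k)
          case 0 then show ?thesis unfolding T_def by simp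
        next
          case (Suc j)
          obtain b where b: "b \<in> ?cand" using False by blast
          have "card (C S k) = k \<or> insert b (C S k) \<notin> F"
          proof -
            have TCk: "T = C S k" using TC Suc by (simp add: Cz_def)
            have "S \<noteq> {} \<and> S \<subseteq> A \<and> 1 \<le> k \<and> k \<le> card A \<and> b \<in> S \<and> b \<notin> C S k"
              using S kA Suc b TCk by auto
            then show ?thesis using cf unfolding capacity_filling_def by blast
          qed
          then show ?thesis using b TC Suc unfolding Cz_def by auto
        qed
        have aX: "a \<in> X"
        proof (rule ccontr)
          assume naX: "a \<notin> X"
          show False
          proof (cases "X = T")
            case True
            have "card X = Suc k \<or> insert a X \<notin> F"
              using cf a(1) S kA naX unfolding capacity_filling_def X_def by auto
            then show False using True cardT a(1) by auto
          next
            case False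
            then obtain x where x: "x \<in> X" "x \<notin> T" using TX by blast
            have "x \<in> S" using x X(2) by auto
            have "insert x T \<in> F" using down[OF X(3)] x TX by auto
            then have "x \<in> ?cand" using x X(2) by auto
            then have "(a, x) \<in> p (Suc k)" using a(2) by blast
            then have le: "f (Suc k) a \<le> f (Suc k) x" unfolding p_def by auto
            have "(x, a) \<in> revealed_rel A F C (Suc k)"
              unfolding revealed_rel_def
              using S x X(2) a(1) naX TC unfolding X_def by auto
            then have "f (Suc k) x < f (Suc k) a" using f[of "Suc k"] kA S X(2) x a(1) by auto
            then show False using le by auto
          qed
        qed
        have "insert a T \<subseteq> X" using aX TX by auto
        moreover have "card (insert a T) = Suc k"
          using cardTk a(1) lex_finite[of p F S k] unfolding T_def by auto
        ultimately have "insert a T = X" using card_seteq[OF fX] X(4) by auto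
        then show ?thesis using lexS unfolding X_def Cz_def by auto
      qed
    qed
  qed
  show "lexicographic A F C"
    unfolding lexicographic_def
  proof (intro exI conjI allI impI)
    show "\<forall>k\<in>{1..card A}. linear_order_on A (p k)" using lin by blast
  next
    fix S q assume h: "S \<noteq> {} \<and> S \<subseteq> A \<and> 1 \<le> q \<and> q \<le> card A"
    then show "C S q = lex_seq p F S q" using main[of S q] unfolding Cz_def by auto
  qed
qed

end
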